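(* Let $p$ be an odd prime and let $n,s$ be positive integers such that $2n/s\geq 3$ is an odd integer; put $q=p^n$, $d=p^s$, and $f(X)=X^{d+1}\in\mathbb{F}_{q^2}[X]$. Then the graph $\mathcal{A}_{q^2,d}$ is isomorphic to the subgraph of $G_f$ induced by the vertex set $\mathbb{F}_{q^2}\times\mathbb{F}_{q^2}$ (the points $(x,y)$ of $\Pi_f$).
   Context: The map $x\mapsto x^d+x$ is a bijection of $\mathbb{F}_{q^2}$. The graph $\mathcal{A}_{q^2,d}$ has vertex set $\mathbb{F}_{q^2}\times\mathbb{F}_{q^2}$; writing vertices as $(a^d+a,x)$ and $(b^d+b,y)$ with $a,b,x,y\in\mathbb{F}_{q^2}$ (uniquely), two distinct vertices are adjacent iff $a^db+ab^d=x+y$. The graph $G_f$ is the orthogonal polarity graph of the plane $\Pi_f$ over $\mathbb{F}_{q^2}$; on its vertices of the form $(x,y)$ with $x,y\in\mathbb{F}_{q^2}$, two distinct vertices $(x_1,y_1)$ and $(x_2,y_2)$ are adjacent iff $f(x_1+x_2)=y_1+y_2$. *)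

theory Defs
  imports "HOL-Computational_Algebra.Primes"
begin

definition A_adj :: "nat \<Rightarrow> ('a::field \<times> 'a) \<Rightarrow> ('a \<times> 'a) \<Rightarrow> bool" where
  "A_adj d u v \<longleftrightarrow> u \<noteq> v \<and>
     (\<exists>a b. a ^ d + a = fst u \<and> b ^ d + b = fst v \<and>
            a ^ d * b + a * b ^ d = snd u + snd v)"

definition G_adj :: "('a::field \<Rightarrow> 'a) \<Rightarrow> ('a \<times> 'a) \<Rightarrow> ('a \<times> 'a) \<Rightarrow> bool" where
  "G_adj f u v \<longleftrightarrow> u \<noteq> v \<and> f (fst u + fst v) = snd u + snd v"

definition graph_iso :: "('v \<Rightarrow> 'v \<Rightarrow> bool) \<Rightarrow> ('w \<Rightarrow> 'w \<Rightarrow> bool) \<Rightarrow> bool" where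
  "graph_iso E1 E2 \<longleftrightarrow> (\<exists>\<sigma>. bij \<sigma> \<and> (\<forall>u v. E1 u v \<longleftrightarrow> E2 (\<sigma> u) (\<sigma> v)))"

end

theory Submission
  imports Defs "HOL-Number_Theory.Residues"
begin

lemma frob_prime:
  fixes x y :: "'a::comm_ring_1"
  assumes "prime p" "of_nat p = (0::'a)"
  shows "(x + y) ^ p = x ^ p + y ^ p"
proof -
  have p0: "p > 0" using assms(1) prime_gt_0_nat by blast
  have "(x + y) ^ p = (\<Sum>k\<le>p. of_nat (p choose k) * x ^ k * y ^ (p - k))"
    by (rule binomial_ring)
  also have "\<dots> = (\<Sum>k\<in>{0,p}. of_nat (p choose k) * x ^ k * y ^ (p - k))"
  proof (rule sum.mono_neutral_right)
    show "\<forall>i\<in>{..p} - {0, p}. of_nat (p choose i) * x ^ i * y ^ (p - i) = 0"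
    proof
      fix i assume i: "i \<in> {..p} - {0, p}"
      have "p dvd (p choose i)" using i p0 assms(1) by (intro dvd_choose_prime) auto
      then obtain r where "p choose i = p * r" by blast
      then have "(of_nat (p choose i) :: 'a) = 0" using assms(2) by simp
      then show "of_nat (p choose i) * x ^ i * y ^ (p - i) = 0" by simp
    qed
  qed auto
  also have "\<dots> = x ^ p + y ^ p" using p0 by simp
  finally show ?thesis .
qed

lemma frob_pow:
  fixes x y :: "'a::comm_ring_1"
  assumes "prime p" "of_nat p = (0::'a)"
  shows "(x + y) ^ (p ^ s) = x ^ (p ^ s) + y ^ (p ^ s)"
proof (induction s)
  case 0 then show ?case by simp
next
  case (Suc s)
  have "(x + y) ^ (p ^ Suc s) = ((x + y) ^ (p ^ s)) ^ p"
    by (metis power_Suc2 power_mult)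
  also have "\<dots> = (x ^ (p ^ s) + y ^ (p ^ s)) ^ p" using Suc by simp
  also have "\<dots> = (x ^ (p ^ s)) ^ p + (y ^ (p ^ s)) ^ p" by (rule frob_prime[OF assms])
  also have "\<dots> = x ^ (p ^ Suc s) + y ^ (p ^ Suc s)"
    by (simp add: power_mult[symmetric] mult.commute)
  finally show ?case .
qed

lemma fermat_ff:
  fixes x :: "'a::{finite,field}"
  assumes "x \<noteq> 0"
  shows "x ^ (card (UNIV :: 'a set) - 1) = 1"
proof -
  have "(\<Prod>y\<in>UNIV-{0}. x * y) = x ^ (card (UNIV :: 'a set) - 1) * \<Prod>(UNIV-{0::'a})"
    by (simp add: prod.distrib mult_ac)
  moreover have "(\<Prod>y\<in>UNIV-{0}. x * y) = (\<Prod>y\<in>UNIV-{0}. y)"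
    by (rule prod.reindex_bij_witness[of _ "\<lambda>y. y / x" "\<lambda>y. x * y"]) (use assms in auto)
  moreover have "\<Prod>(UNIV-{0::'a}) \<noteq> 0" by (simp add: prod_zero_iff)
  ultimately show ?thesis by (metis mult_cancel_right1)
qed

lemma sum_pow_odd:
  fixes d :: nat
  assumes "odd d"
  shows "odd (\<Sum>i<m. d ^ i) \<longleftrightarrow> odd m"
  using assms by (induction m) auto

lemma geom_nat:
  fixes d :: nat
  assumes "d \<ge> 1"
  shows "(d - 1) * (\<Sum>i<m. d ^ i) + 1 = d ^ m"
proof (induction m)
  case 0 then show ?case by simp
next
  case (Suc m)
  have "(d - 1) * (\<Sum>i<Suc m. d ^ i) + 1 = (d - 1) * (\<Sum>i<m. d ^ i) + 1 + (d - 1) * d ^ m"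
    by (simp add: algebra_simps)
  also have "\<dots> = d ^ m + (d - 1) * d ^ m" using Suc by simp
  also have "\<dots> = d ^ Suc m" using assms by (cases d) (auto simp: algebra_simps)
  finally show ?case .
qed

theorem lemma6:
  fixes p n s :: nat
  assumes "prime p" and "odd p" and "n > 0" and "s > 0"
    and "s dvd 2 * n" and "odd (2 * n div s)" and "2 * n div s \<ge> 3"
    and "card (UNIV :: 'a::{finite,field} set) = (p ^ n) ^ 2"
  shows "graph_iso (A_adj (p ^ s) :: 'a \<times> 'a \<Rightarrow> _)
                   (G_adj (\<lambda>X::'a. X ^ (p ^ s + 1)))"
proof -
  define d where "d = p ^ s"
  define m where "m = 2 * n div s"
  have sm: "s * m = 2 * n" using assms(5) unfolding m_def by simp
  have card: "card (UNIV :: 'a set) = d ^ m"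
    using assms(8) sm unfolding d_def by (simp add: power_mult[symmetric] mult.commute)
  have "CHAR('a) dvd card (UNIV :: 'a set)" by (rule CHAR_dvd_CARD)
  moreover have cp: "prime CHAR('a)"
    by (intro prime_CHAR_semidom finite_imp_CHAR_pos) simp
  ultimately have "CHAR('a) dvd p" using assms(8)
    by (metis power_mult[symmetric] prime_dvd_power)
  then have charp: "CHAR('a) = p" using cp assms(1) by (simp add: primes_dvd_imp_eq)
  then have p0: "of_nat p = (0::'a)" by (metis of_nat_CHAR)
  have two: "(2::'a) \<noteq> 0"
  proof
    assume "(2::'a) = 0"
    then have "of_nat 2 = (0::'a)" by simp
    then have "p dvd 2" using charp of_nat_eq_0_iff_char_dvd by metis
    then have "p \<le> 2" by (simp add: dvd_imp_le)
    moreover have "p \<ge> 2" using assms(1) prime_ge_2_nat by blast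
    ultimately show False using assms(2) by simp
  qed
  have frob: "\<And>x y :: 'a. (x + y) ^ d = x ^ d + y ^ d"
    unfolding d_def by (rule frob_pow[OF assms(1) p0])
  have frobm: "(- x) ^ d = - (x ^ d)" for x :: 'a
  proof -
    have "0 < d" unfolding d_def using assms(1) prime_gt_0_nat by simp
    then have "0 = x ^ d + (- x) ^ d" using frob[of x "-x"] by (simp add: zero_power)
    then show ?thesis by (simp add: eq_neg_iff_add_eq_0 add.commute)
  qed
  have d1: "d \<ge> 1" unfolding d_def using assms(1) prime_gt_0_nat by (simp add: Suc_leI)
  have oddd: "odd d" unfolding d_def using assms(2) by simp
  define h :: "'a \<Rightarrow> 'a" where "h a = a ^ d + a" for a
  have inj: "inj h"
  proof (rule injI)
    fix a b assume hab: "h a = h b"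
    have f1: "(a - b) ^ d = a ^ d - b ^ d"
      using frob[of a "-b"] frobm[of b] by simp
    have f2: "a ^ d - b ^ d = b - a" using hab unfolding h_def by (simp add: algebra_simps)
    have e: "(a - b) ^ d = - (a - b)" using f1 f2 by simp
    show "a = b"
    proof (rule ccontr)
      define c where "c = a - b"
      assume "a \<noteq> b"
      then have c0: "c \<noteq> 0" unfolding c_def by simp
      have "c * c ^ (d - 1) = c * (-1)" using e d1 unfolding c_def
        by (metis mult.right_neutral mult_minus_right power_eq_if not_one_le_zero)
      then have cd: "c ^ (d - 1) = -1" using c0 mult_left_cancel by blast
      define S where "S = (\<Sum>i<m. d ^ i)"
      have "card (UNIV :: 'a set) - 1 = (d - 1) * S"
        using geom_nat[OF d1, of m] card unfolding S_def by simp
      then have "1 = (c ^ (d - 1)) ^ S" using fermat_ff[OF c0] by (simp add: power_mult)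
      also have "\<dots> = -1" using cd sum_pow_odd[OF oddd, of m] assms(6) unfolding S_def m_def
        by simp
      finally have "(2::'a) = 0" by (simp add: eq_neg_iff_add_eq_0)
      then show False using two by simp
    qed
  qed
  then have bijh: "bij h" by (simp add: finite_UNIV_inj_surj bij_def)
  define g where "g = inv_into UNIV h"
  have gh: "g (h a) = a" for a unfolding g_def using inj by simp
  have hg: "h (g a) = a" for a unfolding g_def using bijh by (simp add: bij_is_surj surj_f_inv_f)
  define sig :: "'a \<times> 'a \<Rightarrow> 'a \<times> 'a" where
    "sig u = (g (fst u), snd u + g (fst u) ^ (d + 1))" for u
  define tau :: "'a \<times> 'a \<Rightarrow> 'a \<times> 'a" where
    "tau u = (h (fst u), snd u - fst u ^ (d + 1))" for u
  have bs: "bij sig"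
    by (rule o_bij[of tau]) (auto simp: fun_eq_iff sig_def tau_def gh hg)
  have "A_adj d u v \<longleftrightarrow> G_adj (\<lambda>X::'a. X ^ (d + 1)) (sig u) (sig v)" for u v
  proof -
    obtain X x where u: "u = (X, x)" by fastforce
    obtain Y y where v: "v = (Y, y)" by fastforce
    define a where "a = g X"
    define b where "b = g Y"
    have ha: "h a = X" and hb: "h b = Y" unfolding a_def b_def by (simp_all add: hg)
    have ex: "(\<exists>a' b'. a' ^ d + a' = X \<and> b' ^ d + b' = Y \<and> a' ^ d * b' + a' * b' ^ d = x + y)
       \<longleftrightarrow> a ^ d * b + a * b ^ d = x + y"
      using ha hb inj unfolding h_def[symmetric] by (metis injD)
    have "u \<noteq> v \<longleftrightarrow> sig u \<noteq> sig v" using bs by (metis bij_def injD)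
    moreover have "(a + b) ^ (d + 1) = a ^ (d + 1) + b ^ (d + 1) + (a ^ d * b + a * b ^ d)"
      using frob[of a b] by (simp add: algebra_simps)
    ultimately show ?thesis
      unfolding A_adj_def G_adj_def u v using ex
      by (auto simp: sig_def a_def[symmetric] b_def[symmetric] algebra_simps)
  qed
  then show ?thesis unfolding graph_iso_def d_def using bs by blast
qed

end
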